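(* Let $X \in \Lambda^2_{14} = \mathfrak{g}_2$ with $\operatorname{rank} X \leq 4$. Then there exists a $\mathrm{G}_2$-adapted frame $\mathcal{B} = \{e_1,\dots,e_7\}$ such that the matrix $[X]_{\mathcal{B}}$, whose $(i,j)$ entry is $X(e_i,e_j)$, has the form $$ [X]_{\mathcal{B}} = \begin{pmatrix} 0_{3\times 3} & 0_{3\times 4} \\ 0_{4\times 3} & Y \end{pmatrix}, \qquad Y = \begin{pmatrix} 0 & -a & -b & -c \\ a & 0 & -c & b \\ b & c & 0 & -a \\ c & -b & a & 0 \end{pmatrix} $$ for some $a,b,c\in\mathbb{R}$.
   Context: Equip $\mathbb{R}^7$ with its standard inner product, orientation and basis. Let $\varphi = e_{123} - e_{167} - e_{527} - e_{563} - e_{415} - e_{426} - e_{437}$ ($e_{ijk} = e_i\wedge e_j\wedge e_k$) and define $\times$ by $\langle u\times v,w\rangle = \varphi(u,v,w)$. A skew bilinear form $X$ is identified with the operator $X$ given by $X(a,b)=\langle X(a),b\rangle$. $\Lambda^2_{14}=\mathfrak{g}_2$ is the set of skew bilinear forms $X$ with $X(v\times w) = X(v)\times w + v\times X(w)$ for all $v,w$. A $\mathrm{G}_2$-adapted frame is an oriented orthonormal basis $\{e_1,\dots,e_7\}$ with $e_3 = e_1\times e_2$, $e_5 = e_1\times e_4$, $e_6 = e_2\times e_4$, $e_7 = e_3\times e_4$. *)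

theory Defs
  imports "HOL-Analysis.Analysis"
begin

text \<open>Vectors of R^7 are \<open>real^7\<close>; the standard basis vector e_i is \<open>axis i 1\<close>,
  where the index type 7 has elements 1,...,6,7 (with 7 = 0 in the index type).\<close>

definition std :: "7 \<Rightarrow> real^7" where
  "std i = axis i 1"

text \<open>e_{ijk}(u,v,w) = det of the 3x3 minor (rows i,j,k) of [u v w].\<close>
definition eijk :: "7 \<Rightarrow> 7 \<Rightarrow> 7 \<Rightarrow> real^7 \<Rightarrow> real^7 \<Rightarrow> real^7 \<Rightarrow> real" where
  "eijk i j k u v w =
     u$i * (v$j * w$k - v$k * w$j) - u$j * (v$i * w$k - v$k * w$i)
     + u$k * (v$i * w$j - v$j * w$i)"

definition phi :: "real^7 \<Rightarrow> real^7 \<Rightarrow> real^7 \<Rightarrow> real" where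
  "phi u v w = eijk 1 2 3 u v w - eijk 1 6 7 u v w - eijk 5 2 7 u v w - eijk 5 6 3 u v w
              - eijk 4 1 5 u v w - eijk 4 2 6 u v w - eijk 4 3 7 u v w"

definition g2cross :: "real^7 \<Rightarrow> real^7 \<Rightarrow> real^7" where
  "g2cross u v = (\<chi> k. phi u v (std k))"

definition skew_form :: "(real^7 \<Rightarrow> real^7 \<Rightarrow> real) \<Rightarrow> bool" where
  "skew_form X \<longleftrightarrow> bilinear X \<and> (\<forall>u v. X u v = - X v u)"

definition form_op :: "(real^7 \<Rightarrow> real^7 \<Rightarrow> real) \<Rightarrow> real^7 \<Rightarrow> real^7" where
  "form_op X a = (\<chi> j. X a (std j))"

definition in_g2 :: "(real^7 \<Rightarrow> real^7 \<Rightarrow> real) \<Rightarrow> bool" where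
  "in_g2 X \<longleftrightarrow> skew_form X \<and>
     (\<forall>v w. form_op X (g2cross v w) = g2cross (form_op X v) w + g2cross v (form_op X w))"

definition form_rank :: "(real^7 \<Rightarrow> real^7 \<Rightarrow> real) \<Rightarrow> nat" where
  "form_rank X = dim (range (form_op X))"

text \<open>Orientation: the matrix with rows f i has positive determinant (rows in the
  index order 7,1,...,6, a cyclic and hence even permutation of 1,...,7).\<close>
definition G2_adapted_frame :: "(7 \<Rightarrow> real^7) \<Rightarrow> bool" where
  "G2_adapted_frame f \<longleftrightarrow>
     (\<forall>i j. f i \<bullet> f j = (if i = j then 1 else 0)) \<and>
     det (\<chi> i. f i) > 0 \<and>
     f 3 = g2cross (f 1) (f 2) \<and> f 5 = g2cross (f 1) (f 4) \<and>
     f 6 = g2cross (f 2) (f 4) \<and> f 7 = g2cross (f 3) (f 4)"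

definition frame_matrix :: "(real^7 \<Rightarrow> real^7 \<Rightarrow> real) \<Rightarrow> (7 \<Rightarrow> real^7) \<Rightarrow> real^7^7" where
  "frame_matrix X f = (\<chi> i j. X (f i) (f j))"

definition blk :: "7 \<Rightarrow> nat" where
  "blk t = (if t = 4 then 0 else if t = 5 then 1 else if t = 6 then 2 else 3)"

definition normal_form :: "real \<Rightarrow> real \<Rightarrow> real \<Rightarrow> real^7^7" where
  "normal_form a b c = (\<chi> i j.
     if i \<in> {4,5,6,7} \<and> j \<in> {4,5,6,7}
     then [[0,-a,-b,-c],[a,0,-c,b],[b,c,0,-a],[c,-b,a,0]] ! blk i ! blk j
     else 0)"

end

theory Submission
  imports Defs
begin


lemma exhaust_7:
  fixes x :: 7
  shows "x = 1 \<or> x = 2 \<or> x = 3 \<or> x = 4 \<or> x = 5 \<or> x = 6 \<or> x = 7"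
proof (induct x)
  case (of_int z)
  then have "0 \<le> z" "z < 7" by simp_all
  then have "z = 0 \<or> z = 1 \<or> z = 2 \<or> z = 3 \<or> z = 4 \<or> z = 5 \<or> z = 6" by linarith
  then show ?case
    apply (elim disjE)
    apply simp_all
    done
qed

lemma forall_7: "(\<forall>i::7. P i) \<longleftrightarrow> P 1 \<and> P 2 \<and> P 3 \<and> P 4 \<and> P 5 \<and> P 6 \<and> P 7"
proof (intro iffI allI)
  fix i :: 7
  assume "P 1 \<and> P 2 \<and> P 3 \<and> P 4 \<and> P 5 \<and> P 6 \<and> P 7"
  then show "P i" using exhaust_7[of i] by (elim disjE) simp_all
qed simp

lemma UNIV_7: "(UNIV::7 set) = {1,2,3,4,5,6,7}"
proof (rule set_eqI)
  fix x :: 7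
  show "x \<in> UNIV \<longleftrightarrow> x \<in> {1,2,3,4,5,6,7}" using exhaust_7[of x] by (elim disjE) simp_all
qed

lemma sum_7: "sum f (UNIV::7 set) = f 1 + f 2 + f 3 + f 4 + f 5 + f 6 + f 7"
  unfolding UNIV_7 by (simp add: add.assoc)

lemma inner7: "(x::real^7) \<bullet> y = x$1*y$1 + x$2*y$2 + x$3*y$3 + x$4*y$4 + x$5*y$5 + x$6*y$6 + x$7*y$7"
  unfolding inner_vec_def sum_7 by simp

lemma vec7_eq: "(x::real^7) = y \<longleftrightarrow> x$1 = y$1 \<and> x$2 = y$2 \<and> x$3 = y$3 \<and> x$4 = y$4 \<and> x$5 = y$5 \<and> x$6 = y$6 \<and> x$7 = y$7"
  unfolding vec_eq_iff forall_7 ..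

lemma std_comp: "std i $ j = (if j = i then 1 else 0)"
  unfolding std_def axis_def by simp

lemma cross_comp:
  "g2cross u v $ 1 = u$2 * v$3 - u$3 * v$2 + u$4 * v$5 - u$5 * v$4 - u$6 * v$7 + u$7 * v$6"
  "g2cross u v $ 2 = - u$1 * v$3 + u$3 * v$1 + u$4 * v$6 + u$5 * v$7 - u$6 * v$4 - u$7 * v$5"
  "g2cross u v $ 3 = u$1 * v$2 - u$2 * v$1 + u$4 * v$7 - u$5 * v$6 + u$6 * v$5 - u$7 * v$4"
  "g2cross u v $ 4 = - u$1 * v$5 - u$2 * v$6 - u$3 * v$7 + u$5 * v$1 + u$6 * v$2 + u$7 * v$3"
  "g2cross u v $ 5 = u$1 * v$4 - u$2 * v$7 + u$3 * v$6 - u$4 * v$1 - u$6 * v$3 + u$7 * v$2"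
  "g2cross u v $ 6 = u$1 * v$7 + u$2 * v$4 - u$3 * v$5 - u$4 * v$2 + u$5 * v$3 - u$7 * v$1"
  "g2cross u v $ 7 = - u$1 * v$6 + u$2 * v$5 + u$3 * v$4 - u$4 * v$3 - u$5 * v$2 + u$6 * v$1"
  unfolding g2cross_def phi_def eijk_def std_comp vec_lambda_beta by simp_all

lemma cross_inner: "g2cross u v \<bullet> w = phi u v w"
  unfolding inner7 cross_comp phi_def eijk_def by (simp add: algebra_simps)

lemma P2: "g2cross u (g2cross v w) + g2cross v (g2cross u w) = (-2 * (u \<bullet> v)) *\<^sub>R w + (u \<bullet> w) *\<^sub>R v + (v \<bullet> w) *\<^sub>R u"
  unfolding vec7_eq vector_add_component vector_scaleR_component cross_comp inner7 
  by (simp add: algebra_simps)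


lemma cross_anti: "g2cross v u = - g2cross u v"
  unfolding vec7_eq by (simp add: cross_comp algebra_simps)
lemma cross_self[simp]: "g2cross u u = 0"
  unfolding vec7_eq cross_comp by (simp add: algebra_simps)
lemma cross_add_left: "g2cross (a + b) v = g2cross a v + g2cross b v"
  unfolding vec7_eq cross_comp vector_add_component by (simp add: algebra_simps)
lemma cross_add_right: "g2cross u (a + b) = g2cross u a + g2cross u b"
  unfolding vec7_eq cross_comp vector_add_component by (simp add: algebra_simps)
lemma cross_scale_left: "g2cross (c *\<^sub>R a) v = c *\<^sub>R g2cross a v"
  unfolding vec7_eq cross_comp vector_scaleR_component by (simp add: algebra_simps)
lemma cross_scale_right: "g2cross u (c *\<^sub>R a) = c *\<^sub>R g2cross u a"
  unfolding vec7_eq cross_comp vector_scaleR_component by (simp add: algebra_simps)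
lemma cross_zero_left[simp]: "g2cross 0 v = 0"
  unfolding vec7_eq cross_comp by simp
lemma cross_zero_right[simp]: "g2cross u 0 = 0"
  unfolding vec7_eq cross_comp by simp
lemma cross_minus_left: "g2cross (- a) v = - g2cross a v"
  unfolding vec7_eq by (simp add: cross_comp algebra_simps)
lemma cross_minus_right: "g2cross u (- a) = - g2cross u a"
  unfolding vec7_eq by (simp add: cross_comp algebra_simps)

lemma tri_cyc: "g2cross v w \<bullet> u = g2cross u v \<bullet> w"
  unfolding inner7 cross_comp by (simp add: algebra_simps)
lemma tri_swap: "g2cross u w \<bullet> v = - (g2cross u v \<bullet> w)"
  unfolding inner7 cross_comp by (simp add: algebra_simps)
lemma tri_self1[simp]: "g2cross u v \<bullet> u = 0"
  unfolding inner7 cross_comp by (simp add: algebra_simps)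
lemma tri_self2[simp]: "g2cross u v \<bullet> v = 0"
  unfolding inner7 cross_comp by (simp add: algebra_simps)
lemma tri_self1'[simp]: "u \<bullet> g2cross u v = 0"
  by (metis inner_commute tri_self1)
lemma tri_self2'[simp]: "v \<bullet> g2cross u v = 0"
  by (metis inner_commute tri_self2)

lemma D1: "g2cross u w \<bullet> g2cross v w = (u \<bullet> v) * (w \<bullet> w) - (u \<bullet> w) * (v \<bullet> w)"
  unfolding inner7 cross_comp by (simp add: algebra_simps)
lemma D2: "g2cross w u \<bullet> g2cross w v = (u \<bullet> v) * (w \<bullet> w) - (u \<bullet> w) * (v \<bullet> w)"
  unfolding inner7 cross_comp by (simp add: algebra_simps)

lemma ccs: "g2cross u (g2cross u w) = (u \<bullet> w) *\<^sub>R u - (u \<bullet> u) *\<^sub>R w"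
  unfolding vec7_eq by (simp add: cross_comp inner7 algebra_simps)

lemma assoc: "g2cross (g2cross x y) z = (2 * (x \<bullet> z)) *\<^sub>R y - (y \<bullet> z) *\<^sub>R x - (x \<bullet> y) *\<^sub>R z - g2cross x (g2cross y z)"
  unfolding vec7_eq by (simp add: cross_comp inner7 algebra_simps)



definition frm :: "real^7 \<Rightarrow> real^7 \<Rightarrow> real^7 \<Rightarrow> 7 \<Rightarrow> real^7" where
  "frm u v w i = (if i = 1 then u else if i = 2 then v else if i = 3 then g2cross u v
     else if i = 4 then w else if i = 5 then g2cross u w else if i = 6 then g2cross v w
     else g2cross (g2cross u v) w)"

lemma frm_simps[simp]:
  "frm u v w 1 = u" "frm u v w 2 = v" "frm u v w 3 = g2cross u v" "frm u v w 4 = w"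
  "frm u v w 5 = g2cross u w" "frm u v w 6 = g2cross v w" "frm u v w 7 = g2cross (g2cross u v) w"
  unfolding frm_def by simp_all

definition adm :: "real^7 \<Rightarrow> real^7 \<Rightarrow> real^7 \<Rightarrow> bool" where
  "adm u v w \<longleftrightarrow> u \<bullet> u = 1 \<and> v \<bullet> v = 1 \<and> w \<bullet> w = 1 \<and> u \<bullet> v = 0 \<and> u \<bullet> w = 0 \<and> v \<bullet> w = 0
     \<and> g2cross u v \<bullet> w = 0"

lemma frm_orth:
  assumes "adm u v w"
  shows "frm u v w i \<bullet> frm u v w j = (if i = j then 1 else 0)"
proof -
  note A = assms[unfolded adm_def]
  have uu: "u \<bullet> u = 1" and vv: "v \<bullet> v = 1" and ww: "w \<bullet> w = 1" and uv: "u \<bullet> v = 0"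
    and uw: "u \<bullet> w = 0" and vw: "v \<bullet> w = 0" and t: "g2cross u v \<bullet> w = 0" using A by auto
  have vu: "v \<bullet> u = 0" and wu: "w \<bullet> u = 0" and wv: "w \<bullet> v = 0" and t': "w \<bullet> g2cross u v = 0"
    using uv uw vw t by (simp_all add: inner_commute)
  let ?a = "g2cross u v" and ?b = "g2cross u w" and ?c = "g2cross v w" and ?d = "g2cross (g2cross u v) w"
  have n3: "?a \<bullet> ?a = 1" using D1[of u v u] uu vv uv by (simp add: inner_commute)
  have n5: "?b \<bullet> ?b = 1" using D1[of u w u] uu ww uw by (simp add: inner_commute)
  have n6: "?c \<bullet> ?c = 1" using D1[of v w v] vv ww vw by (simp add: inner_commute)
  have n7: "?d \<bullet> ?d = 1" using D1[of ?a w ?a] n3 ww t by (simp add: inner_commute)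
  have p16: "u \<bullet> ?c = 0" using tri_cyc[of v w u] t by (simp add: inner_commute)
  have p25: "v \<bullet> ?b = 0" using tri_swap[of u w v] t by (simp add: inner_commute)
  have p17: "u \<bullet> ?d = 0"
  proof -
    have "?d \<bullet> u = g2cross u ?a \<bullet> w" by (rule tri_cyc)
    also have "\<dots> = 0" using ccs[of u v] uu uv vw by (simp add: inner_commute)
    finally show ?thesis by (simp add: inner_commute)
  qed
  have p27: "v \<bullet> ?d = 0"
  proof -
    have "?d \<bullet> v = g2cross v ?a \<bullet> w" by (rule tri_cyc)
    also have "g2cross v ?a = u" using ccs[of v u] cross_anti[of v u] vv uv
      by (simp add: inner_commute cross_minus_right)
    finally show ?thesis using uw by (simp add: inner_commute)
  qed
  have p35: "?a \<bullet> ?b = 0" using D2[of u v w] uu vw uv uw by (simp add: inner_commute)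
  have p36: "?a \<bullet> ?c = 0"
  proof -
    have "?a = - g2cross v u" using cross_anti[of u v] by simp
    then have "?a \<bullet> ?c = - (g2cross v u \<bullet> g2cross v w)" by simp
    also have "\<dots> = 0" using D2[of v u w] uw uv vw by (simp add: inner_commute)
    finally show ?thesis .
  qed
  have p56: "?b \<bullet> ?c = 0" using D1[of u w v] uv uw vw by (simp add: inner_commute)
  have p57: "?b \<bullet> ?d = 0" using D1[of u w ?a] uw t by (simp add: inner_commute)
  have p67: "?c \<bullet> ?d = 0" using D1[of v w ?a] vw t by (simp add: inner_commute)
  have p37: "?a \<bullet> ?d = 0" by (metis tri_self1 inner_commute)
  have p45: "w \<bullet> ?b = 0" "w \<bullet> ?c = 0" "w \<bullet> ?d = 0" by simp_all
  have p15: "u \<bullet> ?b = 0" "v \<bullet> ?c = 0" "u \<bullet> ?a = 0" "v \<bullet> ?a = 0" by simp_all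
  note F = uu vv ww uv uw vw t vu wu wv t' n3 n5 n6 n7 p16 p25 p17 p27 p35 p36 p56 p57 p67 p37 p45 p15
  show ?thesis
    using exhaust_7[of i] exhaust_7[of j]
    by (elim disjE) (simp_all add: F inner_commute)
qed

lemma det_pm1:
  fixes F :: "real^7^7"
  assumes "\<And>i j. row i F \<bullet> row j F = (if i = j then 1 else 0)"
  shows "det F = 1 \<or> det F = -1"
proof -
  have "F ** transpose F = mat 1"
    using assms unfolding matrix_matrix_mult_def transpose_def mat_def row_def inner_vec_def
    by (simp add: vec_eq_iff)
  then have "det (F ** transpose F) = det (mat 1:: real^7^7)" by simp
  then have "det F * det F = 1" by (simp add: det_mul det_transpose)
  then show ?thesis by (simp add: square_eq_1_iff)
qed

definition DD :: "real^7 \<Rightarrow> real^7 \<Rightarrow> real^7 \<Rightarrow> real" where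
  "DD u v w = det (\<chi> i. frm u v w i)"

lemma DD_pm1: "adm u v w \<Longrightarrow> DD u v w = 1 \<or> DD u v w = -1"
  unfolding DD_def by (rule det_pm1) (simp add: row_def frm_orth)

lemma std_cross:
  "g2cross (std 1) (std 2) = std 3" "g2cross (std 1) (std 4) = std 5"
  "g2cross (std 2) (std 4) = std 6" "g2cross (std 3) (std 4) = std 7"
  by (simp_all add: vec7_eq cross_comp std_comp)

lemma std_inner: "std i \<bullet> std j = (if i = j then 1 else 0)"
  unfolding std_def by (simp add: inner_axis_axis)

lemma adm_std: "adm (std 1) (std 2) (std 4)"
  unfolding adm_def std_cross std_inner by simp

lemma DD_std: "DD (std 1) (std 2) (std 4) = 1"
proof -
  have "(\<chi> i. frm (std 1) (std 2) (std 4) i) = mat 1"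
  proof -
    have "frm (std 1) (std 2) (std 4) i = std i" for i
      using exhaust_7[of i] by (elim disjE) (simp_all add: std_cross)
    then show ?thesis unfolding mat_def std_def axis_def by (simp add: vec_eq_iff)
  qed
  then show ?thesis unfolding DD_def by simp
qed



lemma cont_cross[continuous_intros]:
  "continuous_on S f \<Longrightarrow> continuous_on S g \<Longrightarrow> continuous_on S (\<lambda>t. g2cross (f t) (g t))"
  unfolding g2cross_def phi_def eijk_def
  by (intro continuous_intros)

lemma cont_frm:
  assumes "continuous_on S p" "continuous_on S q" "continuous_on S r"
  shows "continuous_on S (\<lambda>t. frm (p t) (q t) (r t) i)"
  using exhaust_7[of i] by (elim disjE) (simp_all add: assms continuous_intros)

lemma DD_path:
  fixes a b :: real
  assumes ab: "a \<le> b" and cp: "continuous_on {a..b} p" and cq: "continuous_on {a..b} q"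
    and cr: "continuous_on {a..b} r" and ad: "\<And>t. t \<in> {a..b} \<Longrightarrow> adm (p t) (q t) (r t)"
  shows "DD (p a) (q a) (r a) = DD (p b) (q b) (r b)"
proof -
  let ?f = "\<lambda>t. DD (p t) (q t) (r t)"
  have cf: "continuous_on {a..b} ?f"
    unfolding DD_def det_def vec_lambda_beta
    by (intro continuous_intros cont_frm cp cq cr)
  have pm: "?f t = 1 \<or> ?f t = -1" if "t \<in> {a..b}" for t using DD_pm1 ad that by blast
  have nz: "?f t \<noteq> 0" if "t \<in> {a..b}" for t using pm[OF that] by auto
  show ?thesis
  proof (rule ccontr)
    assume ne: "?f a \<noteq> ?f b"
    have a1: "a \<in> {a..b}" "b \<in> {a..b}" using ab by auto
    show False
    proof (cases "?f a = 1")
      case True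
      then have "?f b = -1" using pm[OF a1(2)] ne by auto
      then obtain x where "a \<le> x" "x \<le> b" "?f x = 0"
        using IVT2'[of ?f b 0 a, OF _ _ ab cf] True by auto
      then show False using nz by auto
    next
      case False
      then have "?f a = -1" "?f b = 1" using pm[OF a1(1)] pm[OF a1(2)] ne by auto
      then obtain x where "a \<le> x" "x \<le> b" "?f x = 0"
        using IVT'[of ?f a 0 b, OF _ _ ab cf] by auto
      then show False using nz by auto
    qed
  qed
qed

lemma cross_diff_left: "g2cross (a - b) v = g2cross a v - g2cross b v"
  unfolding vec7_eq by (simp add: cross_comp algebra_simps)
lemma cross_diff_right: "g2cross u (a - b) = g2cross u a - g2cross u b"
  unfolding vec7_eq by (simp add: cross_comp algebra_simps)

lemmas cross_lin = cross_add_left cross_add_right cross_scale_left cross_scale_right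
  cross_diff_left cross_diff_right cross_minus_left cross_minus_right

lemma cross_unit: "u \<bullet> u = 1 \<Longrightarrow> v \<bullet> v = 1 \<Longrightarrow> u \<bullet> v = 0 \<Longrightarrow> g2cross u v \<bullet> g2cross u v = 1"
  using D1[of u v u] by (simp add: inner_commute)

lemma adm_rotA:
  assumes "adm u v w" "c\<^sup>2 + s\<^sup>2 = 1"
  shows "adm (c *\<^sub>R u + s *\<^sub>R v) (- s *\<^sub>R u + c *\<^sub>R v) w"
proof -
  have cs: "c * c + s * s = 1" using assms(2) by (simp add: power2_eq_square)
  have x: "g2cross (c *\<^sub>R u + s *\<^sub>R v) (- s *\<^sub>R u + c *\<^sub>R v) = (c * c + s * s) *\<^sub>R g2cross u v"
    using cross_anti[of v u]
    by (simp add: cross_lin algebra_simps)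
  show ?thesis using assms(1) unfolding adm_def x cs
    by (simp add: inner_add_left inner_add_right inner_commute algebra_simps cs[simplified algebra_simps])
qed

lemma adm_rotB:
  assumes "adm u v w" "c\<^sup>2 + s\<^sup>2 = 1"
  shows "adm u (c *\<^sub>R v + s *\<^sub>R w) (- s *\<^sub>R v + c *\<^sub>R w)"
proof -
  have cs: "c * c + s * s = 1" using assms(2) by (simp add: power2_eq_square)
  have t: "g2cross u w \<bullet> v = - (g2cross u v \<bullet> w)" by (rule tri_swap)
  show ?thesis using assms(1) t unfolding adm_def
    by (simp add: cross_lin inner_add_left inner_add_right inner_diff_left inner_diff_right
        inner_commute algebra_simps cs[simplified algebra_simps])
qed

lemma adm_rotC:
  assumes "adm u v w" "adm u v x" "w \<bullet> x = 0" "c\<^sup>2 + s\<^sup>2 = 1"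
  shows "adm u v (c *\<^sub>R w + s *\<^sub>R x)"
proof -
  have cs: "c * c + s * s = 1" using assms(4) by (simp add: power2_eq_square)
  show ?thesis using assms(1-3) unfolding adm_def
    by (simp add: cross_lin inner_add_left inner_add_right inner_diff_left inner_diff_right
        inner_commute algebra_simps cs[simplified algebra_simps])
qed

lemma adm_rotE:
  assumes "adm u v w" "c\<^sup>2 + s\<^sup>2 = 1"
  shows "adm u (c *\<^sub>R v + s *\<^sub>R g2cross u v) w"
proof -
  have cs: "c * c + s * s = 1" using assms(2) by (simp add: power2_eq_square)
  have A: "u \<bullet> u = 1" "v \<bullet> v = 1" "w \<bullet> w = 1" "u \<bullet> v = 0" "u \<bullet> w = 0" "v \<bullet> w = 0"
     "g2cross u v \<bullet> w = 0" using assms(1) unfolding adm_def by auto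
  have n: "g2cross u v \<bullet> g2cross u v = 1" using cross_unit A by blast
  have cc: "g2cross u (g2cross u v) = - v" using ccs[of u v] A by simp
  show ?thesis using A n cc unfolding adm_def
    by (simp add: cross_lin inner_add_left inner_add_right inner_diff_left inner_diff_right
        inner_commute algebra_simps cs[simplified algebra_simps])
qed

lemma moveA:
  assumes "adm u v w" "0 \<le> \<theta>"
  shows "DD u v w = DD (cos \<theta> *\<^sub>R u + sin \<theta> *\<^sub>R v) (- sin \<theta> *\<^sub>R u + cos \<theta> *\<^sub>R v) w"
  using DD_path[of 0 \<theta> "\<lambda>t. cos t *\<^sub>R u + sin t *\<^sub>R v" "\<lambda>t. - sin t *\<^sub>R u + cos t *\<^sub>R v" "\<lambda>t. w"]
    assms adm_rotA[OF assms(1) sin_cos_squared_add2]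
  by (simp add: continuous_intros)

lemma moveB:
  assumes "adm u v w" "0 \<le> \<theta>"
  shows "DD u v w = DD u (cos \<theta> *\<^sub>R v + sin \<theta> *\<^sub>R w) (- sin \<theta> *\<^sub>R v + cos \<theta> *\<^sub>R w)"
  using DD_path[of 0 \<theta> "\<lambda>t. u" "\<lambda>t. cos t *\<^sub>R v + sin t *\<^sub>R w" "\<lambda>t. - sin t *\<^sub>R v + cos t *\<^sub>R w"]
    assms adm_rotB[OF assms(1) sin_cos_squared_add2]
  by (simp add: continuous_intros)

lemma moveC:
  assumes "adm u v w" "adm u v x" "w \<bullet> x = 0" "0 \<le> \<theta>"
  shows "DD u v w = DD u v (cos \<theta> *\<^sub>R w + sin \<theta> *\<^sub>R x)"
  using DD_path[of 0 \<theta> "\<lambda>t. u" "\<lambda>t. v" "\<lambda>t. cos t *\<^sub>R w + sin t *\<^sub>R x"]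
    assms adm_rotC[OF assms(1-3) sin_cos_squared_add2]
  by (simp add: continuous_intros)

lemma moveE:
  assumes "adm u v w" "0 \<le> \<theta>"
  shows "DD u v w = DD u (cos \<theta> *\<^sub>R v + sin \<theta> *\<^sub>R g2cross u v) w"
  using DD_path[of 0 \<theta> "\<lambda>t. u" "\<lambda>t. cos t *\<^sub>R v + sin t *\<^sub>R g2cross u v" "\<lambda>t. w"]
    assms adm_rotE[OF assms(1) sin_cos_squared_add2]
  by (simp add: continuous_intros)



lemma L3:
  assumes aw: "adm u v w" and aw': "adm u v w'"
  shows "DD u v w = DD u v w'"
proof -
  have A: "u \<bullet> u = 1" "v \<bullet> v = 1" "w \<bullet> w = 1" "u \<bullet> v = 0" "u \<bullet> w = 0" "v \<bullet> w = 0"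
     "g2cross u v \<bullet> w = 0" using aw unfolding adm_def by auto
  have A': "w' \<bullet> w' = 1" "u \<bullet> w' = 0" "v \<bullet> w' = 0" "g2cross u v \<bullet> w' = 0"
    using aw' unfolding adm_def by auto
  define \<alpha> where "\<alpha> = w' \<bullet> w"
  define y where "y = w' - \<alpha> *\<^sub>R w"
  define \<beta> where "\<beta> = norm y"
  define x where "x = (if y = 0 then g2cross u w else (1/\<beta>) *\<^sub>R y)"
  have uy: "u \<bullet> y = 0" "v \<bullet> y = 0" "g2cross u v \<bullet> y = 0" "w \<bullet> y = 0"
    unfolding y_def \<alpha>_def using A A' by (simp_all add: inner_diff_right inner_commute)
  have yy: "y \<bullet> y = \<beta>\<^sup>2" unfolding \<beta>_def by (simp add: power2_norm_eq_inner)
  have admx: "adm u v x"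
  proof (cases "y = 0")
    case True
    have "v \<bullet> g2cross u w = 0" using tri_swap[of u w v] A by (simp add: inner_commute)
    moreover have "g2cross u v \<bullet> g2cross u w = 0" using D2[of u v w] A by (simp add: inner_commute)
    moreover have "g2cross u w \<bullet> g2cross u w = 1" using cross_unit A by blast
    ultimately show ?thesis using True A unfolding adm_def x_def by (simp add: inner_commute)
  next
    case False
    then have "\<beta> \<noteq> 0" unfolding \<beta>_def by simp
    then show ?thesis using False uy yy A unfolding adm_def x_def
      by (simp add: inner_commute power2_eq_square)
  qed
  have xw: "w \<bullet> x = 0" unfolding x_def using uy by simp
  have dec: "w' = \<alpha> *\<^sub>R w + \<beta> *\<^sub>R x"
  proof (cases "y = 0")
    case True then show ?thesis unfolding x_def \<beta>_def using y_def by (simp add: algebra_simps)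
  next
    case False then have "\<beta> \<noteq> 0" unfolding \<beta>_def by simp
    then show ?thesis unfolding x_def using False y_def by simp
  qed
  have "w' \<bullet> w' = \<alpha>\<^sup>2 + \<beta>\<^sup>2"
  proof -
    have "w' = \<alpha> *\<^sub>R w + y" unfolding y_def by simp
    then have "w' \<bullet> w' = (\<alpha> *\<^sub>R w + y) \<bullet> (\<alpha> *\<^sub>R w + y)" by simp
    also have "\<dots> = \<alpha>\<^sup>2 + \<beta>\<^sup>2" using A uy yy
      by (simp add: inner_add_left inner_add_right inner_commute power2_eq_square)
    finally show ?thesis .
  qed
  then have "\<alpha>\<^sup>2 + \<beta>\<^sup>2 = 1" using A' by simp
  then obtain \<theta> where th: "0 \<le> \<theta>" "\<alpha> = cos \<theta>" "\<beta> = sin \<theta>" by (metis sincos_total_2pi)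
  show ?thesis using moveC[OF aw admx xw th(1)] dec th by simp
qed

lemma L2:
  assumes aw: "adm u v w" and aw': "adm u v' w'"
  shows "DD u v w = DD u v' w'"
proof -
  let ?a = "g2cross u v"
  have A: "u \<bullet> u = 1" "v \<bullet> v = 1" "w \<bullet> w = 1" "u \<bullet> v = 0" "u \<bullet> w = 0" "v \<bullet> w = 0"
     "?a \<bullet> w = 0" using aw unfolding adm_def by auto
  have A': "v' \<bullet> v' = 1" "u \<bullet> v' = 0"
    using aw' unfolding adm_def by auto
  have aa: "?a \<bullet> ?a = 1" using cross_unit A by blast
  define \<alpha> where "\<alpha> = v' \<bullet> v"
  define \<beta> where "\<beta> = v' \<bullet> ?a"
  define y where "y = v' - \<alpha> *\<^sub>R v - \<beta> *\<^sub>R ?a"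
  define \<gamma> where "\<gamma> = norm y"
  define w1 where "w1 = (if y = 0 then w else (1/\<gamma>) *\<^sub>R y)"
  have uy: "u \<bullet> y = 0" "v \<bullet> y = 0" "?a \<bullet> y = 0"
    unfolding y_def \<alpha>_def \<beta>_def using A A' aa by (simp_all add: inner_diff_right inner_commute)
  have yy: "y \<bullet> y = \<gamma>\<^sup>2" unfolding \<gamma>_def by (simp add: power2_norm_eq_inner)
  have aw1: "adm u v w1"
  proof (cases "y = 0")
    case True then show ?thesis using aw unfolding w1_def by simp
  next
    case False
    then have "\<gamma> \<noteq> 0" unfolding \<gamma>_def by simp
    then show ?thesis using False uy yy A unfolding adm_def w1_def
      by (simp add: inner_commute power2_eq_square)
  qed
  have gw: "\<gamma> *\<^sub>R w1 = y"
  proof (cases "y = 0")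
    case True then show ?thesis unfolding \<gamma>_def by simp
  next
    case False then have "\<gamma> \<noteq> 0" unfolding \<gamma>_def by simp
    then show ?thesis unfolding w1_def using False by simp
  qed
  have s1: "DD u v w = DD u v w1" by (rule L3[OF aw aw1])
  define \<rho> where "\<rho> = sqrt (\<alpha>\<^sup>2 + \<beta>\<^sup>2)"
  have rho2: "\<rho>\<^sup>2 = \<alpha>\<^sup>2 + \<beta>\<^sup>2" unfolding \<rho>_def by simp
  have rho0: "\<rho> = 0 \<Longrightarrow> \<alpha> = 0 \<and> \<beta> = 0"
  proof -
    assume "\<rho> = 0"
    then have "\<alpha>\<^sup>2 + \<beta>\<^sup>2 = 0" using rho2 by simp
    then show ?thesis by (simp add: sum_power2_eq_zero_iff)
  qed
  define c1 where "c1 = (if \<rho> = 0 then 1 else \<alpha> / \<rho>)"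
  define s1' where "s1' = (if \<rho> = 0 then 0 else \<beta> / \<rho>)"
  have "c1\<^sup>2 + s1'\<^sup>2 = 1"
    unfolding c1_def s1'_def using rho2 by (auto simp: power_divide add_divide_distrib[symmetric])
  then obtain \<theta>1 where th1: "0 \<le> \<theta>1" "c1 = cos \<theta>1" "s1' = sin \<theta>1" by (metis sincos_total_2pi)
  define v1 where "v1 = cos \<theta>1 *\<^sub>R v + sin \<theta>1 *\<^sub>R ?a"
  have s2: "DD u v w1 = DD u v1 w1" unfolding v1_def by (rule moveE[OF aw1 th1(1)])
  have av1: "adm u v1 w1" unfolding v1_def by (rule adm_rotE[OF aw1 sin_cos_squared_add2])
  have rv: "\<rho> *\<^sub>R v1 = \<alpha> *\<^sub>R v + \<beta> *\<^sub>R ?a"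
  proof (cases "\<rho> = 0")
    case True then show ?thesis using rho0 by simp
  next
    case False
    then have "cos \<theta>1 = \<alpha> / \<rho>" "sin \<theta>1 = \<beta> / \<rho>" using th1 c1_def s1'_def by simp_all
    then show ?thesis unfolding v1_def using False by (simp add: scaleR_add_right)
  qed
  have vdec: "v' = \<rho> *\<^sub>R v1 + \<gamma> *\<^sub>R w1" unfolding rv gw y_def by simp
  have "v' \<bullet> v' = (\<alpha> *\<^sub>R v + \<beta> *\<^sub>R ?a + y) \<bullet> (\<alpha> *\<^sub>R v + \<beta> *\<^sub>R ?a + y)"
    unfolding y_def by simp
  also have "\<dots> = \<alpha>\<^sup>2 + \<beta>\<^sup>2 + \<gamma>\<^sup>2" using A uy yy aa
    by (simp add: inner_add_left inner_add_right inner_commute power2_eq_square)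
  finally have "\<rho>\<^sup>2 + \<gamma>\<^sup>2 = 1" using A' rho2 by simp
  then obtain \<theta>2 where th2: "0 \<le> \<theta>2" "\<rho> = cos \<theta>2" "\<gamma> = sin \<theta>2" by (metis sincos_total_2pi)
  define w2 where "w2 = - sin \<theta>2 *\<^sub>R v1 + cos \<theta>2 *\<^sub>R w1"
  have s3: "DD u v1 w1 = DD u v' w2"
    unfolding w2_def vdec th2 by (rule moveB[OF av1 th2(1)])
  have aw2: "adm u v' w2" unfolding w2_def vdec th2 by (rule adm_rotB[OF av1 sin_cos_squared_add2])
  have s4: "DD u v' w2 = DD u v' w'" by (rule L3[OF aw2 aw'])
  show ?thesis using s1 s2 s3 s4 by simp
qed

lemma ex_w:
  assumes "u \<bullet> u = 1" "v \<bullet> v = 1" "u \<bullet> v = 0"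
  obtains w where "adm u v w"
proof -
  let ?S = "{u, v, g2cross u v}"
  have "dim ?S \<le> card ?S" by (rule dim_le_card') simp
  also have "card ?S \<le> 3" by (simp add: card_insert_if)
  finally have "dim ?S < DIM(real^7)" by simp
  then obtain x where x: "x \<noteq> 0" "\<And>y. y \<in> span ?S \<Longrightarrow> orthogonal x y"
    using orthogonal_to_subspace_exists[OF \<open>dim ?S < DIM(real^7)\<close>] by blast
  have o: "x \<bullet> u = 0" "x \<bullet> v = 0" "x \<bullet> g2cross u v = 0"
    using x(2)[OF span_base] unfolding orthogonal_def by auto
  define w where "w = (1 / norm x) *\<^sub>R x"
  have "w \<bullet> w = 1" unfolding w_def using x(1)
    by (simp add: power2_norm_eq_inner[symmetric] power2_eq_square)
  then have "adm u v w" using assms o unfolding adm_def w_def by (simp add: inner_commute)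
  then show ?thesis by (rule that)
qed

lemma DD_one:
  assumes aw: "adm u v w"
  shows "DD u v w = 1"
proof -
  have A: "u \<bullet> u = 1" "v \<bullet> v = 1" "u \<bullet> v = 0" using aw unfolding adm_def by auto
  let ?e = "std 1"
  have ee: "?e \<bullet> ?e = 1" by (simp add: std_inner)
  define \<alpha> where "\<alpha> = ?e \<bullet> u"
  define z where "z = ?e - \<alpha> *\<^sub>R u"
  define \<gamma> where "\<gamma> = norm z"
  define v1 where "v1 = (if z = 0 then v else (1/\<gamma>) *\<^sub>R z)"
  have uz: "u \<bullet> z = 0" unfolding z_def \<alpha>_def using A by (simp add: inner_diff_right inner_commute)
  have zz: "z \<bullet> z = \<gamma>\<^sup>2" unfolding \<gamma>_def by (simp add: power2_norm_eq_inner)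
  have v1: "u \<bullet> v1 = 0" "v1 \<bullet> v1 = 1"
  proof -
    show "u \<bullet> v1 = 0" unfolding v1_def using A uz by simp
    show "v1 \<bullet> v1 = 1"
    proof (cases "z = 0")
      case True then show ?thesis unfolding v1_def using A by simp
    next
      case False then have "\<gamma> \<noteq> 0" unfolding \<gamma>_def by simp
      then show ?thesis unfolding v1_def using False zz by (simp add: power2_eq_square)
    qed
  qed
  obtain w1 where aw1: "adm u v1 w1" using ex_w[OF A(1) v1(2) v1(1)] by blast
  have s1: "DD u v w = DD u v1 w1" by (rule L2[OF aw aw1])
  have gz: "\<gamma> *\<^sub>R v1 = z"
  proof (cases "z = 0")
    case True then show ?thesis unfolding \<gamma>_def by simp
  next
    case False then have "\<gamma> \<noteq> 0" unfolding \<gamma>_def by simp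
    then show ?thesis unfolding v1_def using False by simp
  qed
  have "?e \<bullet> ?e = (\<alpha> *\<^sub>R u + z) \<bullet> (\<alpha> *\<^sub>R u + z)" unfolding z_def by simp
  also have "\<dots> = \<alpha>\<^sup>2 + \<gamma>\<^sup>2" using A uz zz
    by (simp add: inner_add_left inner_add_right inner_commute power2_eq_square)
  finally have "\<alpha>\<^sup>2 + \<gamma>\<^sup>2 = 1" using ee by simp
  then obtain \<theta> where th: "0 \<le> \<theta>" "\<alpha> = cos \<theta>" "\<gamma> = sin \<theta>" by (metis sincos_total_2pi)
  have e: "cos \<theta> *\<^sub>R u + sin \<theta> *\<^sub>R v1 = ?e" using gz th unfolding z_def by simp
  define v2 where "v2 = - sin \<theta> *\<^sub>R u + cos \<theta> *\<^sub>R v1"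
  have s2: "DD u v1 w1 = DD ?e v2 w1" using moveA[OF aw1 th(1)] unfolding e v2_def .
  have av2: "adm ?e v2 w1" using adm_rotA[OF aw1 sin_cos_squared_add2[of \<theta>]] unfolding e v2_def .
  have s3: "DD ?e v2 w1 = DD ?e (std 2) (std 4)" by (rule L2[OF av2 adm_std])
  show ?thesis using s1 s2 s3 DD_std by simp
qed



lemma form_inner:
  assumes "skew_form X"
  shows "X a b = form_op X a \<bullet> b"
proof -
  have lin: "linear (X a)" using assms unfolding skew_form_def bilinear_def by blast
  have b: "b = b$1 *\<^sub>R std 1 + b$2 *\<^sub>R std 2 + b$3 *\<^sub>R std 3 + b$4 *\<^sub>R std 4 + b$5 *\<^sub>R std 5
      + b$6 *\<^sub>R std 6 + b$7 *\<^sub>R std 7"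
    unfolding vec7_eq by (simp add: std_comp)
  have "X a b = b$1 * X a (std 1) + b$2 * X a (std 2) + b$3 * X a (std 3) + b$4 * X a (std 4)
      + b$5 * X a (std 5) + b$6 * X a (std 6) + b$7 * X a (std 7)"
    by (subst b) (simp add: linear_add[OF lin] linear_scale[OF lin])
  then show ?thesis unfolding inner7 form_op_def by (simp add: algebra_simps)
qed

lemma skewX: "skew_form X \<Longrightarrow> X a b = - X b a"
  unfolding skew_form_def by blast

lemma table:
  assumes "adm u v w"
  shows "g2cross u (g2cross u v) = - v" "g2cross u (g2cross u w) = - w"
    "g2cross u (g2cross v w) = - g2cross (g2cross u v) w"
    "g2cross u (g2cross (g2cross u v) w) = g2cross v w"
    "g2cross v u = - g2cross u v"
    "g2cross v (g2cross u v) = u"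
    "g2cross v (g2cross u w) = g2cross (g2cross u v) w"
    "g2cross v (g2cross v w) = - w"
    "g2cross v (g2cross (g2cross u v) w) = - g2cross u w"
    "g2cross (g2cross u v) u = v"
    "g2cross (g2cross u v) v = - u"
    "g2cross (g2cross u v) (g2cross u w) = - g2cross v w"
    "g2cross (g2cross u v) (g2cross v w) = g2cross u w"
    "g2cross (g2cross u v) (g2cross (g2cross u v) w) = - w"
proof -
  have A: "u \<bullet> u = 1" "v \<bullet> v = 1" "w \<bullet> w = 1" "u \<bullet> v = 0" "u \<bullet> w = 0" "v \<bullet> w = 0"
     "g2cross u v \<bullet> w = 0" using assms unfolding adm_def by auto
  have A2: "v \<bullet> u = 0" "w \<bullet> u = 0" "w \<bullet> v = 0" "w \<bullet> g2cross u v = 0" using A by (simp_all add: inner_commute)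
  have aa: "g2cross u v \<bullet> g2cross u v = 1" using cross_unit A by blast
  show T1: "g2cross u (g2cross u v) = - v" using ccs[of u v] A by simp
  show T2: "g2cross u (g2cross u w) = - w" using ccs[of u w] A by simp
  show T3: "g2cross u (g2cross v w) = - g2cross (g2cross u v) w" using assoc[of u v w] A by simp
  show T4: "g2cross u (g2cross (g2cross u v) w) = g2cross v w"
    using assoc[of u "g2cross u v" w] A T1 by (simp add: cross_minus_left)
  show T5': "g2cross v u = - g2cross u v" by (rule cross_anti)
  show T5: "g2cross v (g2cross u v) = u"
    using ccs[of v u] A A2 cross_anti[of u v] by (simp add: cross_minus_right)
  show T6: "g2cross v (g2cross u w) = g2cross (g2cross u v) w"
    using P2[of v u w] A A2 T3 by (simp add: eq_neg_iff_add_eq_0 add.commute)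
  show T7: "g2cross v (g2cross v w) = - w" using ccs[of v w] A by simp
  show T8: "g2cross v (g2cross (g2cross u v) w) = - g2cross u w"
    using assoc[of v "g2cross u v" w] A A2 T5 by simp
  show T9: "g2cross (g2cross u v) u = v" using cross_anti[of "g2cross u v" u] T1 by simp
  show T10: "g2cross (g2cross u v) v = - u" using cross_anti[of "g2cross u v" v] T5 by simp
  show "g2cross (g2cross u v) (g2cross u w) = - g2cross v w"
  proof -
    have "g2cross (g2cross u w) (g2cross u v) = - g2cross u (g2cross w (g2cross u v))"
      using assoc[of u w "g2cross u v"] A A2 by simp
    also have "g2cross w (g2cross u v) = - g2cross (g2cross u v) w" by (rule cross_anti)
    finally have "g2cross (g2cross u w) (g2cross u v) = g2cross v w" using T4 by (simp add: cross_minus_right)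
    then show ?thesis using cross_anti[of "g2cross u v" "g2cross u w"] by simp
  qed
  show "g2cross (g2cross u v) (g2cross v w) = g2cross u w"
  proof -
    have "g2cross (g2cross v w) (g2cross u v) = - g2cross v (g2cross w (g2cross u v))"
      using assoc[of v w "g2cross u v"] A A2 by simp
    also have "g2cross w (g2cross u v) = - g2cross (g2cross u v) w" by (rule cross_anti)
    finally have "g2cross (g2cross v w) (g2cross u v) = - g2cross u w" using T8 by (simp add: cross_minus_right)
    then show ?thesis using cross_anti[of "g2cross u v" "g2cross v w"] by simp
  qed
  show "g2cross (g2cross u v) (g2cross (g2cross u v) w) = - w"
    using ccs[of "g2cross u v" w] A aa by simp
qed

theorem corollary3p2:
  fixes X :: "real^7 \<Rightarrow> real^7 \<Rightarrow> real"
  assumes "in_g2 X" and "form_rank X \<le> 4"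
  shows "\<exists>f. G2_adapted_frame f \<and> (\<exists>a b c. frame_matrix X f = normal_form a b c)"
proof -
  have sk: "skew_form X" using assms(1) unfolding in_g2_def by blast
  have der: "\<And>v w. form_op X (g2cross v w) = g2cross (form_op X v) w + g2cross v (form_op X w)"
    using assms(1) unfolding in_g2_def by blast
  let ?O = "form_op X"
  let ?R = "range ?O"
  have fi: "\<And>a b. X a b = ?O a \<bullet> b" using form_inner[OF sk] .
  have ker: "?O x = 0" if "\<And>b. x \<bullet> ?O b = 0" for x
  proof -
    have "?O x \<bullet> ?O x = X x (?O x)" by (simp add: fi)
    also have "\<dots> = - X (?O x) x" by (rule skewX[OF sk])
    also have "\<dots> = - (x \<bullet> ?O (?O x))" by (simp add: fi inner_commute)
    also have "\<dots> = 0" using that by simp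
    finally show ?thesis by simp
  qed
  have dR: "dim ?R < DIM(real^7)" using assms(2) unfolding form_rank_def by simp
  obtain u0 where u0: "u0 \<noteq> 0" "\<And>y. y \<in> span ?R \<Longrightarrow> orthogonal u0 y"
    using orthogonal_to_subspace_exists[OF dR] by blast
  have dR2: "dim (insert u0 ?R) < DIM(real^7)"
    using assms(2) unfolding form_rank_def dim_insert by simp
  obtain v0 where v0: "v0 \<noteq> 0" "\<And>y. y \<in> span (insert u0 ?R) \<Longrightarrow> orthogonal v0 y"
    using orthogonal_to_subspace_exists[OF dR2] by blast
  define u where "u = (1 / norm u0) *\<^sub>R u0"
  define v where "v = (1 / norm v0) *\<^sub>R v0"
  have u0R: "u0 \<bullet> ?O b = 0" for b using u0(2)[of "?O b"] by (simp add: span_base orthogonal_def)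
  have v0R: "v0 \<bullet> ?O b = 0" for b using v0(2)[of "?O b"] by (simp add: span_base orthogonal_def)
  have v0u0: "v0 \<bullet> u0 = 0" using v0(2)[of u0] by (simp add: span_base orthogonal_def)
  have Ou: "?O u = 0" by (rule ker) (simp add: u_def u0R)
  have Ov: "?O v = 0" by (rule ker) (simp add: v_def v0R)
  have uu: "u \<bullet> u = 1" unfolding u_def using u0(1)
    by (simp add: power2_norm_eq_inner[symmetric] power2_eq_square)
  have vv: "v \<bullet> v = 1" unfolding v_def using v0(1)
    by (simp add: power2_norm_eq_inner[symmetric] power2_eq_square)
  have uv: "u \<bullet> v = 0" unfolding u_def v_def using v0u0 by (simp add: inner_commute)
  obtain w where aw: "adm u v w" using ex_w[OF uu vv uv] by blast
  define f where "f = frm u v w"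
  have G: "G2_adapted_frame f"
    unfolding G2_adapted_frame_def f_def
    using frm_orth[OF aw] DD_one[OF aw] unfolding DD_def by simp
  have Ouv: "?O (g2cross u v) = 0" using der[of u v] Ou Ov by simp
  have Xz: "X u g = 0" "X v g = 0" "X (g2cross u v) g = 0" for g by (simp_all add: fi Ou Ov Ouv)
  have Xz2: "X g u = 0" "X g v = 0" "X g (g2cross u v) = 0" for g
    using Xz skewX[OF sk] by (metis neg_equal_0_iff_equal)+
  have Xww: "X w w = 0" using skewX[OF sk, of w w] by simp
  have Xneg: "X w (- g) = - X w g" for g by (simp add: fi)
  have X0: "X w 0 = 0" by (simp add: fi)
  have Xd: "X (g2cross x w) g = - X w (g2cross x g)" if "?O x = 0" for x g
  proof -
    have "?O (g2cross x w) = g2cross x (?O w)" using der[of x w] that by simp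
    then have "X (g2cross x w) g = g2cross x (?O w) \<bullet> g" by (simp add: fi)
    also have "\<dots> = - (g2cross x g \<bullet> ?O w)" by (rule tri_swap)
    also have "\<dots> = - X w (g2cross x g)" by (simp add: fi inner_commute)
    finally show ?thesis .
  qed
  note Xd1 = Xd[OF Ou] and Xd2 = Xd[OF Ov] and Xd3 = Xd[OF Ouv]
  define a where "a = - X w (g2cross u w)"
  define b where "b = - X w (g2cross v w)"
  define c where "c = - X w (g2cross (g2cross u v) w)"
  have abc: "X w (g2cross u w) = - a" "X w (g2cross v w) = - b" "X w (g2cross (g2cross u v) w) = - c"
    unfolding a_def b_def c_def by simp_all
  note T = table[OF aw]
  have "frame_matrix X f = normal_form a b c"
    unfolding frame_matrix_def normal_form_def vec_eq_iff forall_7 f_def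
    by (simp add: X0 Xz Xz2 Xww Xneg Xd1 Xd2 Xd3 T abc blk_def)
  then show ?thesis using G by blast
qed

end
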